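(* Let $m\ge 2$ and suppose there exist mutually unbiased equiangular tight frames $(v_1,\dots,v_k)$ and $(w_1,\dots,w_l)$ for $\mathbb{R}^m$. Then $$\lambda(m,k+l)\ \ge\ \frac{m-\delta_{m,k}\,\delta_{m,l}}{2\sqrt{m}-\delta_{m,k}-\delta_{m,l}},$$ where for integers $n\ge m$, $\delta_{m,n}:=\frac{m}{n}\left(1+\sqrt{\frac{(n-1)(n-m)}{m}}\right)$.
   Context: For a real Banach space $X$ and finite-dimensional subspace $Y$, a projection onto $Y$ is a bounded linear $P:X\to Y$ with $P|_Y=\mathrm{Id}_Y$; the relative projection constant is $\lambda(Y,X)=\inf\{\|P\|: P \text{ a projection from } X \text{ onto } Y\}$. For integers $n\ge m$, the maximal relative projection constant is $\lambda(m,n):=\sup\{\lambda(Y,\ell_\infty^{(n)}): Y\subset \ell_\infty^{(n)},\ \dim Y=m\}$, where $\ell_\infty^{(n)}$ is $\mathbb{R}^n$ with the max norm. A system of unit vectors $(v_1,\dots,v_n)$ in $\mathbb{R}^m$ is an equiangular tight frame if $|\langle v_i,v_j\rangle|$ is the same constant for all $i\ne j$ and $VV^\top=\frac{n}{m}\mathrm{I}_m$, where $V$ has columns $v_1,\dots,v_n$. Two equiangular tight frames $(v_1,\dots,v_k)$ and $(w_1,\dots,w_l)$ for $\mathbb{R}^m$ are mutually unbiased if there is $c\in\mathbb{R}$ with $|\langle v_i,w_j\rangle|=c$ for all $i,j$. *)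

theory Defs
  imports "HOL-Analysis.Analysis"
begin

text \<open>Vectors of R^n are represented as functions nat => real vanishing outside {0..<n};
  n x n (resp. n x m) matrices as functions nat => nat => real (entries outside range ignored).\<close>

definition vecs :: "nat \<Rightarrow> (nat \<Rightarrow> real) set" where
  "vecs n = {x. \<forall>i\<ge>n. x i = 0}"

definition matvec :: "nat \<Rightarrow> nat \<Rightarrow> (nat \<Rightarrow> nat \<Rightarrow> real) \<Rightarrow> (nat \<Rightarrow> real) \<Rightarrow> (nat \<Rightarrow> real)" where
  "matvec r c A x = (\<lambda>i. if i < r then (\<Sum>j<c. A i j * x j) else 0)"

definition linf :: "nat \<Rightarrow> (nat \<Rightarrow> real) \<Rightarrow> real" where
  "linf n x = Max (insert 0 {\<bar>x i\<bar> | i. i < n})"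

definition is_subspace_dim :: "nat \<Rightarrow> nat \<Rightarrow> (nat \<Rightarrow> real) set \<Rightarrow> bool" where
  "is_subspace_dim n m Y \<longleftrightarrow> (\<exists>B. Y = matvec n m B ` vecs m \<and> inj_on (matvec n m B) (vecs m))"

definition is_projection :: "nat \<Rightarrow> (nat \<Rightarrow> real) set \<Rightarrow> (nat \<Rightarrow> nat \<Rightarrow> real) \<Rightarrow> bool" where
  "is_projection n Y P \<longleftrightarrow> (\<forall>x\<in>vecs n. matvec n n P x \<in> Y) \<and> (\<forall>y\<in>Y. matvec n n P y = y)"

definition opnorm_inf :: "nat \<Rightarrow> (nat \<Rightarrow> nat \<Rightarrow> real) \<Rightarrow> real" where
  "opnorm_inf n P = Sup {linf n (matvec n n P x) | x. x \<in> vecs n \<and> linf n x \<le> 1}"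

definition rel_proj_const :: "nat \<Rightarrow> (nat \<Rightarrow> real) set \<Rightarrow> real" where
  "rel_proj_const n Y = Inf {opnorm_inf n P | P. is_projection n Y P}"

definition max_rel_proj_const :: "nat \<Rightarrow> nat \<Rightarrow> real" where
  "max_rel_proj_const m n = Sup {rel_proj_const n Y | Y. is_subspace_dim n m Y}"

definition is_ETF :: "nat \<Rightarrow> (nat \<Rightarrow> real ^ 'm) \<Rightarrow> bool" where
  "is_ETF k v \<longleftrightarrow>
     (\<forall>i<k. norm (v i) = 1) \<and>
     (\<exists>c. \<forall>i<k. \<forall>j<k. i \<noteq> j \<longrightarrow> \<bar>v i \<bullet> v j\<bar> = c) \<and>
     (\<chi> a b. \<Sum>i<k. v i $ a * v i $ b) = (real k / real CARD('m)) *\<^sub>R (mat 1 :: real ^ 'm ^ 'm)"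

definition mutually_unbiased :: "nat \<Rightarrow> (nat \<Rightarrow> real ^ 'm) \<Rightarrow> nat \<Rightarrow> (nat \<Rightarrow> real ^ 'm) \<Rightarrow> bool" where
  "mutually_unbiased k v l w \<longleftrightarrow> (\<exists>c. \<forall>i<k. \<forall>j<l. \<bar>v i \<bullet> w j\<bar> = c)"

definition delta :: "nat \<Rightarrow> nat \<Rightarrow> real" where
  "delta m n = real m / real n * (1 + sqrt (real (n - 1) * (real n - real m) / real m))"

end

theory Submission
  imports Defs
begin

definition ixm :: "'a::finite \<Rightarrow> nat" where
  "ixm = (SOME h. bij_betw h (UNIV::'a set) {..<CARD('a)})"

lemma ixm_bij: "bij_betw (ixm::'a::finite \<Rightarrow> nat) UNIV {..<CARD('a)}"
proof -
  have "\<exists>h. bij_betw h (UNIV::'a set) {..<CARD('a)}"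
    using ex_bij_betw_finite_nat[of "UNIV::'a set"] by (simp add: atLeast0LessThan)
  then show ?thesis unfolding ixm_def by (rule someI_ex)
qed

lemma ixm_lt: "ixm (a::'a::finite) < CARD('a)"
  using ixm_bij[where 'a='a] by (auto simp: bij_betw_def)

lemma ixm_inj: "inj (ixm::'a::finite \<Rightarrow> nat)"
  using ixm_bij[where 'a='a] by (auto simp: bij_betw_def)

lemma ixm_inv1: "inv_into UNIV ixm (ixm (a::'a::finite)) = a"
  by (simp add: ixm_inj)

lemma ixm_inv2: "r < CARD('a) \<Longrightarrow> ixm (inv_into UNIV (ixm::'a::finite\<Rightarrow>nat) r) = r"
  using ixm_bij[where 'a='a] by (metis bij_betw_inv_into_right lessThan_iff)

lemma sum_ixm: "(\<Sum>r<CARD('a). f r) = (\<Sum>a\<in>(UNIV::'a::finite set). f (ixm a))"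
  using sum.reindex_bij_betw[OF ixm_bij[where 'a='a], of f] by simp

definition tov :: "(nat \<Rightarrow> real) \<Rightarrow> real ^ 'a::finite" where
  "tov z = (\<chi> a. z (ixm a))"

definition rowv :: "(nat \<Rightarrow> nat \<Rightarrow> real) \<Rightarrow> nat \<Rightarrow> real ^ 'a::finite" where
  "rowv B i = (\<chi> a. B i (ixm a))"

definition emb :: "nat \<Rightarrow> (nat \<Rightarrow> real ^ 'a::finite) \<Rightarrow> real ^ 'a \<Rightarrow> (nat \<Rightarrow> real)" where
  "emb n b x = (\<lambda>i. if i < n then b i \<bullet> x else 0)"

lemma matvec_rowv: "matvec n CARD('a) B z = emb n (rowv B :: nat \<Rightarrow> real ^ 'a::finite) (tov z)"
  unfolding matvec_def emb_def
  by (rule ext) (simp add: sum_ixm[where 'a='a] inner_vec_def rowv_def tov_def)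

lemma tov_surj: "tov (\<lambda>r. if r < CARD('a) then (x::real^'a::finite) $ inv_into UNIV ixm r else 0) = x"
  by (simp add: tov_def vec_eq_iff ixm_lt ixm_inv1)

lemma tov_inj: "inj_on (tov :: _ \<Rightarrow> real^'a::finite) (vecs CARD('a))"
proof
  fix z z' assume z: "z \<in> vecs CARD('a)" and z': "z' \<in> vecs CARD('a)"
    and e: "(tov z :: real^'a) = tov z'"
  show "z = z'"
  proof
    fix r show "z r = z' r"
    proof (cases "r < CARD('a)")
      case True
      have "z r = (tov z :: real^'a) $ inv_into UNIV ixm r" 
        by (simp add: tov_def ixm_inv2[OF True])
      also have "\<dots> = (tov z' :: real^'a) $ inv_into UNIV ixm r" using e by simp
      also have "\<dots> = z' r" by (simp add: tov_def ixm_inv2[OF True])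
      finally show ?thesis .
    next
      case False then show ?thesis using z z' by (simp add: vecs_def)
    qed
  qed
qed

lemma tov_vecs_image: "(tov :: _ \<Rightarrow> real^'a::finite) ` vecs CARD('a) = UNIV"
proof -
  have "x \<in> tov ` vecs CARD('a)" for x :: "real^'a"
  proof -
    have "(\<lambda>r. if r < CARD('a) then x $ inv_into UNIV ixm r else 0) \<in> vecs CARD('a)"
      by (simp add: vecs_def)
    moreover have "tov (\<lambda>r. if r < CARD('a) then x $ inv_into UNIV ixm r else 0) = x"
      by (rule tov_surj)
    ultimately show ?thesis by (intro image_eqI) (rule sym)
  qed
  then show ?thesis by blast
qed

lemma subspace_range: "matvec n CARD('a) B ` vecs CARD('a) = range (emb n (rowv B :: nat \<Rightarrow> real ^ 'a::finite))"
proof -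
  have "matvec n CARD('a) B ` vecs CARD('a) = emb n (rowv B :: nat \<Rightarrow> real ^ 'a) ` (tov ` vecs CARD('a))"
    by (simp add: matvec_rowv[where 'a='a] image_image)
  then show ?thesis by (simp add: tov_vecs_image)
qed

lemma subspace_inj: "inj_on (matvec n CARD('a) B) (vecs CARD('a)) \<longleftrightarrow> inj (emb n (rowv B :: nat \<Rightarrow> real ^ 'a::finite))"
proof -
  have eq: "matvec n CARD('a) B = emb n (rowv B :: nat \<Rightarrow> real ^ 'a) \<circ> tov"
    by (rule ext) (simp add: matvec_rowv[where 'a='a])
  show ?thesis unfolding eq
  proof
    assume "inj_on (emb n (rowv B :: nat \<Rightarrow> real ^ 'a) \<circ> tov) (vecs CARD('a))"
    then have "inj_on (emb n (rowv B :: nat \<Rightarrow> real ^ 'a)) (tov ` vecs CARD('a))"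
      by (rule inj_on_imageI)
    then show "inj (emb n (rowv B :: nat \<Rightarrow> real ^ 'a))" by (simp only: tov_vecs_image)
  next
    assume a: "inj (emb n (rowv B :: nat \<Rightarrow> real ^ 'a))"
    show "inj_on (emb n (rowv B :: nat \<Rightarrow> real ^ 'a) \<circ> tov) (vecs CARD('a))"
      by (rule comp_inj_on[OF tov_inj]) (simp add: tov_vecs_image a)
  qed
qed

lemma linf_fin: "finite (insert 0 {\<bar>x i\<bar> | i. i < n})" for x :: "nat \<Rightarrow> real"
proof -
  have "{\<bar>x i\<bar> | i. i < n} = (\<lambda>i. \<bar>x i\<bar>) ` {..<n}" by auto
  then show ?thesis by (metis finite_imageI finite_lessThan finite_insert)
qed

lemma linf_ge: "i < n \<Longrightarrow> \<bar>x i\<bar> \<le> linf n x"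
  unfolding linf_def by (rule Max_ge[OF linf_fin]) auto

lemma linf_nonneg: "0 \<le> linf n x"
  unfolding linf_def by (rule Max_ge[OF linf_fin]) auto

lemma linf_le: "0 \<le> M \<Longrightarrow> (\<And>i. i < n \<Longrightarrow> \<bar>x i\<bar> \<le> M) \<Longrightarrow> linf n x \<le> M"
  unfolding linf_def by (subst Max_le_iff[OF linf_fin]) auto

lemma opnorm_elem_le:
  assumes "x \<in> vecs n" "linf n x \<le> 1"
  shows "linf n (matvec n n P x) \<le> (\<Sum>i<n. \<Sum>j<n. \<bar>P i j\<bar>)"
proof (rule linf_le)
  show "0 \<le> (\<Sum>i<n. \<Sum>j<n. \<bar>P i j\<bar>)" by (simp add: sum_nonneg)
  fix i assume i: "i < n"
  have "\<bar>matvec n n P x i\<bar> = \<bar>\<Sum>j<n. P i j * x j\<bar>" using i by (simp add: matvec_def)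
  also have "\<dots> \<le> (\<Sum>j<n. \<bar>P i j * x j\<bar>)" by (rule sum_abs)
  also have "\<dots> \<le> (\<Sum>j<n. \<bar>P i j\<bar>)"
  proof (rule sum_mono)
    fix j assume "j \<in> {..<n}"
    then have "\<bar>x j\<bar> \<le> 1" using linf_ge[of j n x] assms by simp
    then show "\<bar>P i j * x j\<bar> \<le> \<bar>P i j\<bar>"
      by (simp add: abs_mult mult_left_le)
  qed
  also have "\<dots> \<le> (\<Sum>i<n. \<Sum>j<n. \<bar>P i j\<bar>)"
    using i by (intro member_le_sum) (auto simp: sum_nonneg)
  finally show "\<bar>matvec n n P x i\<bar> \<le> (\<Sum>i<n. \<Sum>j<n. \<bar>P i j\<bar>)" .
qed

lemma opnorm_bdd: "bdd_above {linf n (matvec n n P x) | x. x \<in> vecs n \<and> linf n x \<le> 1}"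
  unfolding bdd_above_def using opnorm_elem_le by blast

lemma zero_in_set: "linf n (matvec n n P (\<lambda>_. 0)) \<in> {linf n (matvec n n P x) | x. x \<in> vecs n \<and> linf n x \<le> 1}"
proof -
  have "linf n (\<lambda>_. 0) \<le> 1" by (rule linf_le) auto
  then show ?thesis by (auto simp: vecs_def)
qed

lemma opnorm_nonneg: "0 \<le> opnorm_inf n P"
  unfolding opnorm_inf_def
  by (rule order_trans[OF linf_nonneg cSup_upper[OF zero_in_set opnorm_bdd]])

lemma opnorm_row:
  assumes i: "i < n"
  shows "(\<Sum>j<n. \<bar>P i j\<bar>) \<le> opnorm_inf n P"
proof -
  define x where "x = (\<lambda>j. if j < n then sgn (P i j) else 0)"
  have xv: "x \<in> vecs n" by (simp add: x_def vecs_def)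
  have xl: "linf n x \<le> 1" by (rule linf_le) (auto simp: x_def abs_sgn_eq)
  have "(\<Sum>j<n. \<bar>P i j\<bar>) = matvec n n P x i"
    using i by (simp add: matvec_def x_def abs_sgn[symmetric])
  also have "\<dots> \<le> \<bar>matvec n n P x i\<bar>" by simp
  also have "\<dots> \<le> linf n (matvec n n P x)" by (rule linf_ge[OF i])
  also have "\<dots> \<le> opnorm_inf n P" unfolding opnorm_inf_def
    by (rule cSup_upper[OF _ opnorm_bdd]) (use xv xl in blast)
  finally show ?thesis .
qed

lemma opnorm_le:
  assumes "0 \<le> M" "\<And>i. i < n \<Longrightarrow> (\<Sum>j<n. \<bar>P i j\<bar>) \<le> M"
  shows "opnorm_inf n P \<le> M"
  unfolding opnorm_inf_def
proof (rule cSup_least)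
  show "{linf n (matvec n n P x) | x. x \<in> vecs n \<and> linf n x \<le> 1} \<noteq> {}" using zero_in_set by blast
  fix y assume "y \<in> {linf n (matvec n n P x) | x. x \<in> vecs n \<and> linf n x \<le> 1}"
  then obtain x where x: "x \<in> vecs n" "linf n x \<le> 1" and y: "y = linf n (matvec n n P x)" by blast
  show "y \<le> M" unfolding y
  proof (rule linf_le[OF assms(1)])
    fix i assume i: "i < n"
    have "\<bar>matvec n n P x i\<bar> = \<bar>\<Sum>j<n. P i j * x j\<bar>" using i by (simp add: matvec_def)
    also have "\<dots> \<le> (\<Sum>j<n. \<bar>P i j * x j\<bar>)" by (rule sum_abs)
    also have "\<dots> \<le> (\<Sum>j<n. \<bar>P i j\<bar>)"
    proof (rule sum_mono)
      fix j assume "j \<in> {..<n}"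
      then have "\<bar>x j\<bar> \<le> 1" using linf_ge[of j n x] x by simp
      then show "\<bar>P i j * x j\<bar> \<le> \<bar>P i j\<bar>"
        by (simp add: abs_mult mult_left_le)
    qed
    also have "\<dots> \<le> M" using assms(2)[OF i] .
    finally show "\<bar>matvec n n P x i\<bar> \<le> M" .
  qed
qed

lemma emb_in_vecs: "emb n b x \<in> vecs n"
  by (simp add: emb_def vecs_def)

lemma emb_inj_D:
  assumes "inj (emb n b)" "\<And>i. i < n \<Longrightarrow> b i \<bullet> x = b i \<bullet> y"
  shows "x = y"
proof -
  have "emb n b x = emb n b y" using assms(2) by (auto simp: emb_def)
  then show ?thesis using assms(1) by (simp add: inj_eq)
qed

lemma lower_bound_lemma:
  fixes b :: "nat \<Rightarrow> real ^ 'a::finite"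
  assumes inj: "inj (emb n b)"
    and proj: "is_projection n (range (emb n b)) P"
    and XM: "\<And>i j. i < n \<Longrightarrow> j < n \<Longrightarrow> \<bar>X i j\<bar> \<le> M i"
    and col: "\<And>j. j < n \<Longrightarrow> (\<Sum>i<n. X i j *\<^sub>R b i) = \<mu> *\<^sub>R b j"
  shows "\<mu> * CARD('a) \<le> opnorm_inf n P * (\<Sum>i<n. M i)"
proof -
  define e where "e j = (\<lambda>r::nat. if r = j then 1 else (0::real))" for j
  have ev: "j < n \<Longrightarrow> e j \<in> vecs n" for j by (auto simp: e_def vecs_def)
  have Pe: "matvec n n P (e j) = (\<lambda>i. if i < n then P i j else 0)" if "j < n" for j
    using that by (auto simp: matvec_def e_def if_distrib cong: if_cong)
  have "\<forall>j. \<exists>z. j < n \<longrightarrow> matvec n n P (e j) = emb n b z"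
    using proj ev unfolding is_projection_def by blast
  then obtain z where z: "\<And>j. j < n \<Longrightarrow> matvec n n P (e j) = emb n b (z j)" by metis
  have Pz: "P i j = b i \<bullet> z j" if "i < n" "j < n" for i j
  proof -
    have "matvec n n P (e j) i = emb n b (z j) i" using z[OF that(2)] by simp
    then show ?thesis using that Pe[OF that(2)] by (simp add: emb_def)
  qed
  have recon: "(\<Sum>j<n. (b j \<bullet> x) *\<^sub>R z j) = x" for x
  proof (rule emb_inj_D[OF inj])
    fix i assume i: "i < n"
    have "matvec n n P (emb n b x) = emb n b x"
      using proj unfolding is_projection_def by blast
    then have "matvec n n P (emb n b x) i = emb n b x i" by simp
    then have "(\<Sum>j<n. P i j * (b j \<bullet> x)) = b i \<bullet> x"
      using i by (simp add: matvec_def emb_def)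
    then have "(\<Sum>j<n. (b i \<bullet> z j) * (b j \<bullet> x)) = b i \<bullet> x"
      using i Pz by simp
    then show "b i \<bullet> (\<Sum>j<n. (b j \<bullet> x) *\<^sub>R z j) = b i \<bullet> x"
      by (simp add: inner_sum_right mult.commute)
  qed
  have trace: "(\<Sum>j<n. b j \<bullet> z j) = real CARD('a)"
  proof -
    have "(\<Sum>j<n. b j \<bullet> z j) = (\<Sum>j<n. \<Sum>c\<in>UNIV. b j $ c * z j $ c)"
      by (simp add: inner_vec_def)
    also have "\<dots> = (\<Sum>c\<in>UNIV. \<Sum>j<n. b j $ c * z j $ c)" by (rule sum.swap)
    also have "\<dots> = (\<Sum>c\<in>(UNIV::'a set). (\<Sum>j<n. (b j \<bullet> axis c 1) *\<^sub>R z j) $ c)"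
      by (simp add: inner_axis)
    also have "\<dots> = (\<Sum>c\<in>(UNIV::'a set). (axis c 1 :: real^'a) $ c)"
      by (simp only: recon)
    also have "\<dots> = real CARD('a)" by simp
    finally show ?thesis .
  qed
  have "(\<Sum>i<n. \<Sum>j<n. P i j * X i j) = (\<Sum>j<n. \<Sum>i<n. (b i \<bullet> z j) * X i j)"
    by (subst sum.swap) (auto intro!: sum.cong simp: Pz)
  also have "\<dots> = (\<Sum>j<n. (\<Sum>i<n. X i j *\<^sub>R b i) \<bullet> z j)"
    by (simp add: inner_sum_left mult.commute)
  also have "\<dots> = (\<Sum>j<n. \<mu> * (b j \<bullet> z j))"
    by (auto intro!: sum.cong simp: col)
  also have "\<dots> = \<mu> * CARD('a)" by (simp add: sum_distrib_left[symmetric] trace)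
  finally have eq: "(\<Sum>i<n. \<Sum>j<n. P i j * X i j) = \<mu> * CARD('a)" .
  have "(\<Sum>i<n. \<Sum>j<n. P i j * X i j) \<le> (\<Sum>i<n. M i * opnorm_inf n P)"
  proof (rule sum_mono)
    fix i assume "i \<in> {..<n}"
    then have i: "i < n" by simp
    have M0: "0 \<le> M i" using XM[OF i i] by linarith
    have "(\<Sum>j<n. P i j * X i j) \<le> (\<Sum>j<n. \<bar>P i j\<bar> * M i)"
    proof (rule sum_mono)
      fix j assume "j \<in> {..<n}"
      then have "\<bar>X i j\<bar> \<le> M i" using XM i by simp
      then have "\<bar>P i j * X i j\<bar> \<le> \<bar>P i j\<bar> * M i" by (simp add: abs_mult mult_left_mono)
      then show "P i j * X i j \<le> \<bar>P i j\<bar> * M i" by linarith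
    qed
    also have "\<dots> = M i * (\<Sum>j<n. \<bar>P i j\<bar>)" by (simp add: sum_distrib_left mult.commute)
    also have "\<dots> \<le> M i * opnorm_inf n P" by (rule mult_left_mono[OF opnorm_row[OF i] M0])
    finally show "(\<Sum>j<n. P i j * X i j) \<le> M i * opnorm_inf n P" .
  qed
  also have "\<dots> = opnorm_inf n P * (\<Sum>i<n. M i)" by (simp add: sum_distrib_left mult.commute)
  finally show ?thesis using eq by simp
qed

lemma sq_le_self: "(p::real)^2 \<le> p \<Longrightarrow> p \<le> 1"
proof (rule ccontr)
  assume a: "p^2 \<le> p" and "\<not> p \<le> 1"
  then have "p > 1" by simp
  then have "p * 1 < p * p" by (intro mult_strict_left_mono) auto
  then show False using a by (simp add: power2_eq_square)
qed

lemma gram_mv: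
  fixes b :: "nat \<Rightarrow> real^'a::finite"
  shows "(\<chi> a c. \<Sum>r<n. b r $ a * b r $ c) *v y = (\<Sum>r<n. (b r \<bullet> y) *\<^sub>R b r)"
proof -
  have "((\<chi> a c. \<Sum>r<n. b r $ a * b r $ c) *v y) $ a = (\<Sum>r<n. (b r \<bullet> y) *\<^sub>R b r) $ a" for a
  proof -
    have "((\<chi> a c. \<Sum>r<n. b r $ a * b r $ c) *v y) $ a = (\<Sum>c\<in>UNIV. (\<Sum>r<n. b r $ a * b r $ c) * y $ c)"
      by (simp add: matrix_vector_mult_def)
    also have "\<dots> = (\<Sum>c\<in>UNIV. \<Sum>r<n. b r $ a * (b r $ c * y $ c))"
      by (simp add: sum_distrib_right mult.assoc)
    also have "\<dots> = (\<Sum>r<n. \<Sum>c\<in>UNIV. b r $ a * (b r $ c * y $ c))" by (rule sum.swap)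
    also have "\<dots> = (\<Sum>r<n. (b r \<bullet> y) * b r $ a)"
      by (simp add: inner_vec_def sum_distrib_left mult.commute)
    also have "\<dots> = (\<Sum>r<n. (b r \<bullet> y) *\<^sub>R b r) $ a" by (simp add: sum_component)
    finally show ?thesis .
  qed
  then show ?thesis by (simp add: vec_eq_iff)
qed


lemma proj_exists:
  fixes b :: "nat \<Rightarrow> real ^ 'a::finite"
  assumes inj: "inj (emb n b)"
  shows "\<exists>P. is_projection n (range (emb n b)) P \<and> opnorm_inf n P \<le> real n"
proof -
  define G :: "real^'a^'a" where "G = (\<chi> a c. \<Sum>r<n. b r $ a * b r $ c)"
  have Gv: "G *v y = (\<Sum>r<n. (b r \<bullet> y) *\<^sub>R b r)" for y
    unfolding G_def by (rule gram_mv)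
  have ker: "\<forall>y. G *v y = 0 \<longrightarrow> y = 0"
  proof (intro allI impI)
    fix y assume y0: "G *v y = 0"
    have "y \<bullet> (G *v y) = (\<Sum>r<n. (b r \<bullet> y)^2)"
      by (simp add: Gv inner_sum_right power2_eq_square inner_commute)
    then have s0: "(\<Sum>r<n. (b r \<bullet> y)^2) = 0" using y0 by simp
    have "\<forall>r\<in>{..<n}. (b r \<bullet> y)^2 = 0"
      using sum_nonneg_eq_0_iff[of "{..<n}" "\<lambda>r. (b r \<bullet> y)^2"] s0 by simp
    then show "y = 0" by (intro emb_inj_D[OF inj]) simp
  qed
  then obtain H where HG: "H ** G = mat 1" using matrix_left_invertible_ker by blast
  then have GH: "G ** H = mat 1" using matrix_left_right_inverse by blast
  have GT: "transpose G = G" by (simp add: G_def transpose_def vec_eq_iff mult.commute)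
  have tHG: "transpose H ** G = mat 1"
  proof -
    have "transpose H ** G = transpose (G ** H)" by (simp add: matrix_transpose_mul GT)
    then show ?thesis by (simp add: GH)
  qed
  have HT: "transpose H = H"
  proof -
    have "transpose H = transpose H ** (G ** H)" by (simp add: GH)
    also have "\<dots> = (transpose H ** G) ** H" by (simp add: matrix_mul_assoc)
    also have "\<dots> = H" by (simp add: tHG)
    finally show ?thesis .
  qed
  have Hsym: "x \<bullet> (H *v y) = (H *v x) \<bullet> y" for x y
  proof -
    have "H *v x = x v* H" by (metis HT transpose_matrix_vector)
    then show ?thesis by (simp add: dot_lmul_matrix)
  qed
  have GHv: "G *v (H *v y) = y" for y by (simp add: matrix_vector_mul_assoc GH)
  have HGv: "H *v (G *v y) = y" for y by (simp add: matrix_vector_mul_assoc HG)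
  define P where "P i j = b i \<bullet> (H *v b j)" for i j
  have Psym: "P i j = P j i" for i j
  proof -
    have "P i j = (H *v b i) \<bullet> b j" unfolding P_def by (rule Hsym)
    also have "\<dots> = P j i" unfolding P_def by (rule inner_commute)
    finally show ?thesis .
  qed
  have Pidem: "(\<Sum>r<n. P i r * P r j) = P i j" for i j
  proof -
    have "(\<Sum>r<n. P i r * P r j) = (\<Sum>r<n. ((H *v b i) \<bullet> b r) * (b r \<bullet> (H *v b j)))"
      by (simp only: P_def Hsym[of "b i"])
    also have "\<dots> = (H *v b i) \<bullet> (\<Sum>r<n. (b r \<bullet> (H *v b j)) *\<^sub>R b r)"
      by (simp add: inner_sum_right mult.commute)
    also have "\<dots> = (H *v b i) \<bullet> (G *v (H *v b j))"
      by (simp only: Gv)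
    also have "\<dots> = (H *v b i) \<bullet> b j" by (simp only: GHv)
    also have "\<dots> = P i j" unfolding P_def by (rule Hsym[symmetric])
    finally show ?thesis .
  qed
  have Pbound: "\<bar>P i j\<bar> \<le> 1" if i: "i < n" and j: "j < n" for i j
  proof -
    have "(\<Sum>r<n. P i r * P r i) = (\<Sum>r<n. (P i r)^2)"
      by (intro sum.cong refl) (metis Psym power2_eq_square)
    then have Pii: "P i i = (\<Sum>r<n. (P i r)^2)"
      using Pidem[of i i] by simp
    have "(P i j)^2 \<le> (\<Sum>r<n. (P i r)^2)"
      using j by (intro member_le_sum) auto
    then have a: "(P i j)^2 \<le> P i i" using Pii by simp
    have "(P i i)^2 \<le> (\<Sum>r<n. (P i r)^2)"
      using i by (intro member_le_sum) auto
    then have "(P i i)^2 \<le> P i i" using Pii by simp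
    then have "P i i \<le> 1" by (rule sq_le_self)
    then have "(P i j)^2 \<le> 1" using a by simp
    then show ?thesis by (simp add: abs_square_le_1)
  qed
  have mv: "matvec n n P x = emb n b (H *v (\<Sum>j<n. x j *\<^sub>R b j))" for x
  proof
    fix i
    have "(\<Sum>j<n. P i j * x j) = (\<Sum>j<n. x j * ((H *v b i) \<bullet> b j))"
      by (simp only: P_def Hsym[of "b i"] mult.commute)
    also have "\<dots> = (H *v b i) \<bullet> (\<Sum>j<n. x j *\<^sub>R b j)"
      by (simp add: inner_sum_right)
    also have "\<dots> = b i \<bullet> (H *v (\<Sum>j<n. x j *\<^sub>R b j))" by (rule Hsym[symmetric])
    finally show "matvec n n P x i = emb n b (H *v (\<Sum>j<n. x j *\<^sub>R b j)) i"
      by (simp add: matvec_def emb_def)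
  qed
  have isp: "is_projection n (range (emb n b)) P"
    unfolding is_projection_def
  proof (intro conjI ballI)
    fix x show "matvec n n P x \<in> range (emb n b)" by (simp add: mv)
  next
    fix y assume "y \<in> range (emb n b)"
    then obtain x where y: "y = emb n b x" by blast
    have "(\<Sum>j<n. y j *\<^sub>R b j) = G *v x" by (simp add: y emb_def Gv)
    then show "matvec n n P y = y" by (simp add: mv HGv y)
  qed
  have "opnorm_inf n P \<le> real n"
  proof (rule opnorm_le)
    fix i assume i: "i < n"
    have "(\<Sum>j<n. \<bar>P i j\<bar>) \<le> (\<Sum>j<n. (1::real))" using Pbound i by (intro sum_mono) auto
    then show "(\<Sum>j<n. \<bar>P i j\<bar>) \<le> real n" by simp
  qed simp
  then show ?thesis using isp by blast
qed

lemma etf_frame: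
  fixes v :: "nat \<Rightarrow> real ^ 'm::finite"
  assumes "is_ETF k v"
  shows "(\<Sum>i<k. (v i \<bullet> x) *\<^sub>R v i) = (real k / real CARD('m)) *\<^sub>R x"
proof -
  have M: "(\<chi> a b. \<Sum>i<k. v i $ a * v i $ b) = (real k / real CARD('m)) *\<^sub>R (mat 1 :: real ^ 'm ^ 'm)"
    using assms unfolding is_ETF_def by blast
  have Mab: "(\<Sum>i<k. v i $ a * v i $ b) = (real k / real CARD('m)) * (if a = b then 1 else 0)" for a b
  proof -
    have "(\<chi> a b. \<Sum>i<k. v i $ a * v i $ b) $ a $ b = ((real k / real CARD('m)) *\<^sub>R (mat 1 :: real ^ 'm ^ 'm)) $ a $ b"
      using M by simp
    then show ?thesis by (simp add: mat_def)
  qed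
  show ?thesis
  proof (subst vec_eq_iff, intro allI)
    fix a
    have "(\<Sum>i<k. (v i \<bullet> x) *\<^sub>R v i) $ a = (\<Sum>i<k. (\<Sum>b\<in>UNIV. v i $ b * x $ b) * v i $ a)"
      by (simp add: sum_component inner_vec_def)
    also have "\<dots> = (\<Sum>i<k. \<Sum>b\<in>UNIV. x $ b * (v i $ a * v i $ b))"
      by (simp add: sum_distrib_left sum_distrib_right mult_ac)
    also have "\<dots> = (\<Sum>b\<in>UNIV. \<Sum>i<k. x $ b * (v i $ a * v i $ b))" by (rule sum.swap)
    also have "\<dots> = (\<Sum>b\<in>UNIV. x $ b * (\<Sum>i<k. v i $ a * v i $ b))"
      by (simp add: sum_distrib_left)
    also have "\<dots> = (\<Sum>b\<in>UNIV. x $ b * ((real k / real CARD('m)) * (if a = b then 1 else 0)))"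
      by (simp only: Mab)
    also have "\<dots> = (real k / real CARD('m)) * x $ a"
      by (simp add: if_distrib cong: if_cong)
    finally show "(\<Sum>i<k. (v i \<bullet> x) *\<^sub>R v i) $ a = ((real k / real CARD('m)) *\<^sub>R x) $ a" by simp
  qed
qed

lemma etf_sq_sum:
  fixes v w :: "nat \<Rightarrow> real ^ 'm::finite"
  assumes "is_ETF l w" and "norm x = 1"
  shows "(\<Sum>j<l. (x \<bullet> w j)^2) = real l / real CARD('m)"
proof -
  have "(\<Sum>j<l. (x \<bullet> w j)^2) = x \<bullet> (\<Sum>j<l. (w j \<bullet> x) *\<^sub>R w j)"
    by (simp add: inner_sum_right power2_eq_square inner_commute)
  also have "\<dots> = real l / real CARD('m) * (x \<bullet> x)" by (simp add: etf_frame[OF assms(1)])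
  also have "\<dots> = real l / real CARD('m)" using assms(2) by (simp add: norm_eq_1)
  finally show ?thesis .
qed

lemma sum_split_nat: "(\<Sum>i<k+l. f i) = (\<Sum>i<k. f i) + (\<Sum>i<l. f (k + i))" for k l :: nat
  by (induction l) (simp_all add: add.assoc)

lemma etf_const:
  fixes v :: "nat \<Rightarrow> real ^ 'm::finite"
  assumes etf: "is_ETF k v" and m2: "CARD('m) \<ge> 2" and k1: "k \<ge> 1"
  obtains c where "\<And>i j. i < k \<Longrightarrow> j < k \<Longrightarrow> i \<noteq> j \<Longrightarrow> \<bar>v i \<bullet> v j\<bar> = c"
    "c \<ge> 0" "k \<ge> 2" "k \<ge> CARD('m)" "1 + (real k - 1) * c^2 = real k / real CARD('m)"
proof -
  obtain c where c: "\<And>i j. i < k \<Longrightarrow> j < k \<Longrightarrow> i \<noteq> j \<Longrightarrow> \<bar>v i \<bullet> v j\<bar> = c"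
    using etf unfolding is_ETF_def by blast
  have n0: "norm (v 0) = 1" using etf k1 unfolding is_ETF_def by auto
  have s: "(\<Sum>j<k. (v 0 \<bullet> v j)^2) = real k / real CARD('m)"
    by (rule etf_sq_sum[OF etf n0])
  have "(\<Sum>j<k. (v 0 \<bullet> v j)^2) = (v 0 \<bullet> v 0)^2 + (\<Sum>j\<in>{..<k} - {0}. (v 0 \<bullet> v j)^2)"
    using k1 by (subst sum.remove[of _ 0]) auto
  also have "(\<Sum>j\<in>{..<k} - {0}. (v 0 \<bullet> v j)^2) = (\<Sum>j\<in>{..<k} - {0}. c^2)"
  proof (rule sum.cong[OF refl])
    fix j assume "j \<in> {..<k} - {0}"
    then have "\<bar>v 0 \<bullet> v j\<bar> = c" using c[of 0 j] k1 by auto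
    then show "(v 0 \<bullet> v j)^2 = c^2" by (metis power2_abs)
  qed
  also have "\<dots> = (real k - 1) * c^2" using k1 by (simp add: of_nat_diff)
  finally have eq: "1 + (real k - 1) * c^2 = real k / real CARD('m)"
    using s n0 by (simp add: norm_eq_1)
  have mpos: "real CARD('m) > 0" by simp
  have "real k / real CARD('m) \<ge> 1"
    using eq k1 by (metis add_increasing2 diff_ge_0_iff_ge le_add_same_cancel1 mult_nonneg_nonneg of_nat_1 of_nat_mono zero_le_power2)
  then have km: "k \<ge> CARD('m)" using mpos by (simp add: le_divide_eq)
  then have k2: "k \<ge> 2" using m2 by simp
  have c0: "c \<ge> 0" using c[of 0 1] k2 by force
  show ?thesis using that[OF c c0 k2 km eq] by blast
qed

lemma mub_const:
  fixes v w :: "nat \<Rightarrow> real ^ 'm::finite"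
  assumes ev: "is_ETF k v" and ew: "is_ETF l w" and mu: "mutually_unbiased k v l w"
    and k1: "k \<ge> 1" and l1: "l \<ge> 1"
  shows "\<And>i j. i < k \<Longrightarrow> j < l \<Longrightarrow> \<bar>v i \<bullet> w j\<bar> = 1 / sqrt (real CARD('m))"
proof -
  obtain c where c: "\<And>i j. i < k \<Longrightarrow> j < l \<Longrightarrow> \<bar>v i \<bullet> w j\<bar> = c"
    using mu unfolding mutually_unbiased_def by blast
  have n0: "norm (v 0) = 1" using ev k1 unfolding is_ETF_def by auto
  have s: "(\<Sum>j<l. (v 0 \<bullet> w j)^2) = real l / real CARD('m)"
    by (rule etf_sq_sum[OF ew n0])
  have "(\<Sum>j<l. (v 0 \<bullet> w j)^2) = (\<Sum>j<l. c^2)"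
    using c[of 0] k1 by (intro sum.cong refl) (metis lessThan_iff power2_abs less_le_trans zero_less_one)
  then have "real l * c^2 = real l / real CARD('m)" using s by simp
  then have c2: "c^2 = 1 / real CARD('m)" using l1 by (simp add: field_simps)
  have c0: "c \<ge> 0" using c[of 0 0] k1 l1 by force
  have "c = sqrt (1 / real CARD('m))" using c2 c0 by (simp add: real_sqrt_unique)
  then have "c = 1 / sqrt (real CARD('m))" by (simp add: real_sqrt_divide)
  then show "\<And>i j. i < k \<Longrightarrow> j < l \<Longrightarrow> \<bar>v i \<bullet> w j\<bar> = 1 / sqrt (real CARD('m))" using c by simp
qed

lemma alg_identity:
  fixes s k l Dk Dl :: real
  assumes s: "s > 0" and k: "k > 0" and l: "l > 0"
    and Al: "s * l / s^2 - Dl > 0" and Ak: "s * k / s^2 - Dk > 0"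
  shows "(s^2 - (s^2 * Dk / k) * (s^2 * Dl / l)) / (2 * s - s^2 * Dk / k - s^2 * Dl / l)
       = (Dk + ((s*k/s^2 - Dk)/(s*l/s^2 - Dl)) * s * l / s^2) * s^2 / (k + l * ((s*k/s^2 - Dk)/(s*l/s^2 - Dl)))"
proof -
  define A where "A = k - s*Dk"
  define B where "B = l - s*Dl"
  have B: "B > 0" using Al s unfolding B_def by (simp add: power2_eq_square field_simps)
  have A: "A > 0" using Ak s unfolding A_def by (simp add: power2_eq_square field_simps)
  have e1: "s*l/s^2 - Dl = B/s" using s unfolding B_def by (simp add: power2_eq_square field_simps)
  have e2: "s*k/s^2 - Dk = A/s" using s unfolding A_def by (simp add: power2_eq_square field_simps)
  have dpos: "l*A + k*B > 0" using A B k l by (simp add: add_pos_pos)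
  have L: "(s^2 - (s^2 * Dk / k) * (s^2 * Dl / l)) / (2 * s - s^2 * Dk / k - s^2 * Dl / l)
        = s * (k*l - s^2*Dk*Dl) / (l*A + k*B)"
  proof -
    have n: "s^2 - (s^2 * Dk / k) * (s^2 * Dl / l) = s^2 * (k*l - s^2*Dk*Dl) / (k*l)"
      using k l by (simp add: power2_eq_square field_simps)
    have d: "2 * s - s^2 * Dk / k - s^2 * Dl / l = s * (l*A + k*B) / (k*l)"
      using k l unfolding A_def B_def by (simp add: power2_eq_square field_simps)
    have gen: "\<And>X D. D > 0 \<Longrightarrow> (s^2*X/(k*l)) / (s*D/(k*l)) = s*X/D"
      using s k l by (simp add: power2_eq_square field_simps)
    show ?thesis unfolding n d by (rule gen[OF dpos])
  qed
  have R: "(Dk + ((s*k/s^2 - Dk)/(s*l/s^2 - Dl)) * s * l / s^2) * s^2 / (k + l * ((s*k/s^2 - Dk)/(s*l/s^2 - Dl)))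
        = s * (s*Dk*B + l*A) / (l*A + k*B)"
  proof -
    have r: "(s*k/s^2 - Dk)/(s*l/s^2 - Dl) = A / B" unfolding e1 e2 using s B by simp
    have "(Dk + (A/B) * s * l / s^2) * s^2 = s * (s*Dk*B + l*A) / B"
      using s B by (simp add: power2_eq_square field_simps)
    moreover have "k + l * (A/B) = (l*A + k*B) / B" using B by (simp add: field_simps)
    ultimately show ?thesis unfolding r using B dpos by (simp add: field_simps)
  qed
  have "s*Dk*B + l*A = k*l - s^2*Dk*Dl" unfolding A_def B_def by (simp add: power2_eq_square algebra_simps)
  then show ?thesis using L R by simp
qed

lemma alg_identity2:
  fixes s k l Dk Dl \<rho> :: real
  assumes "s > 0" "k > 0" "l > 0" "s * l / s^2 - Dl > 0" "s * k / s^2 - Dk > 0"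
    and r: "\<rho> = (s*k/s^2 - Dk)/(s*l/s^2 - Dl)"
  shows "(s^2 - (s^2 * Dk / k) * (s^2 * Dl / l)) / (2 * s - s^2 * Dk / k - s^2 * Dl / l)
       = (Dk + \<rho> * s * l / s^2) * s^2 / (k + l * \<rho>)"
  unfolding r by (rule alg_identity[OF assms(1-5)])

lemma D_delta:
  assumes c0: "c \<ge> 0" and eq: "1 + (real k - 1) * c^2 = real k / real m"
    and k1: "k \<ge> 1" and m0: "m > 0"
  shows "1 + inverse c * (real k / real m - 1) = real k * delta m k / real m"
proof -
  have q: "real k / real m - 1 = (real k - 1) * c^2" using eq by simp
  have L: "inverse c * (real k / real m - 1) = (real k - 1) * c"
  proof (cases "c = 0")
    case True then show ?thesis by simp
  next
    case False then show ?thesis unfolding q by (simp add: power2_eq_square field_simps)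
  qed
  have "real (k - 1) * (real k - real m) / real m = real (k - 1) * (real k / real m - 1)"
    using m0 by (simp add: field_simps)
  also have "\<dots> = ((real k - 1) * c)^2" unfolding q using k1 by (simp add: of_nat_diff power2_eq_square)
  finally have "sqrt (real (k - 1) * (real k - real m) / real m) = (real k - 1) * c"
    using c0 k1 by simp
  moreover have gen: "\<And>R. real k * (real m / real k * (1 + R)) / real m = 1 + R"
    using k1 m0 by (simp add: field_simps)
  ultimately have "real k * delta m k / real m = 1 + (real k - 1) * c"
    unfolding delta_def by simp
  then show ?thesis using L by simp
qed

lemma D_less:
  fixes k m c s :: real
  assumes c0: "c \<ge> 0" and eq: "1 + (k - 1) * c^2 = k / m"
    and k1: "k \<ge> 1" and m2: "m \<ge> 2" and s: "s = sqrt m"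
  shows "1 + (k - 1) * c < s * k / m"
proof -
  have m0: "m > 0" using m2 by simp
  have ss: "s^2 = m" using s m0 by simp
  have s1: "s > 1" using s m2 by (simp add: real_less_rsqrt)
  have q1: "k / m \<ge> 1" using eq k1 c0 by (smt (verit) mult_nonneg_nonneg zero_le_power2)
  define r where "r = (k - 1) * c"
  define t where "t = s * k / m - 1"
  have r0: "r \<ge> 0" using k1 c0 by (simp add: r_def)
  have t0: "t > 0"
  proof -
    have "s * 1 \<le> s * (k / m)" by (rule mult_left_mono) (use q1 s1 in auto)
    then show ?thesis using s1 by (simp add: t_def)
  qed
  have q: "(k - 1) * c^2 = k / m - 1" using eq by simp
  have "r^2 = (k - 1) * ((k - 1) * c^2)" by (simp add: r_def power2_eq_square mult_ac)
  then have r2: "r^2 = (k - 1) * (k / m - 1)" by (simp only: q)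
  have "t^2 - r^2 = (k / m) * (s - 1)^2"
    unfolding r2 t_def using m0 ss[symmetric] s1 by (simp add: power2_eq_square field_simps)
  moreover have "(k / m) * (s - 1)^2 > 0" using q1 s1 by (intro mult_pos_pos) auto
  ultimately have "r^2 < t^2" by simp
  then have "r < t" using t0 by (simp add: power2_less_imp_less)
  then show ?thesis by (simp add: r_def t_def)
qed

lemma inv_mult_le1: "(c::real) \<ge> 0 \<Longrightarrow> inverse c * c \<le> 1"
  by (cases "c = 0") auto

lemma block_sum:
  fixes v :: "nat \<Rightarrow> real ^ 'm::finite"
  assumes etf: "is_ETF k v" and j: "j < k"
  shows "(\<Sum>i<k. (if i = j then 1 else t * (v i \<bullet> v j)) *\<^sub>R v i)
     = (1 + t * (real k / real CARD('m) - 1)) *\<^sub>R v j"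
proof -
  have vj: "v j \<bullet> v j = 1" using etf j unfolding is_ETF_def by (simp add: norm_eq_1)
  have pw: "(if i = j then 1 else t * (v i \<bullet> v j)) *\<^sub>R v i
      = t *\<^sub>R ((v i \<bullet> v j) *\<^sub>R v i) + (if i = j then (1 - t) *\<^sub>R v j else 0)" for i
    using vj by (auto simp: algebra_simps)
  have "(\<Sum>i<k. (if i = j then 1 else t * (v i \<bullet> v j)) *\<^sub>R v i)
     = t *\<^sub>R (\<Sum>i<k. (v i \<bullet> v j) *\<^sub>R v i) + (1 - t) *\<^sub>R v j"
    using j by (simp add: pw sum.distrib scaleR_sum_right)
  also have "\<dots> = (1 + t * (real k / real CARD('m) - 1)) *\<^sub>R v j"
    by (simp add: etf_frame[OF etf] algebra_simps)
  finally show ?thesis .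
qed

theorem theorem3:
  fixes v w :: "nat \<Rightarrow> real ^ 'm" and k l :: nat
  assumes "CARD('m) \<ge> 2" and "k \<ge> 1" and "l \<ge> 1"
    and "is_ETF k v" and "is_ETF l w"
    and "mutually_unbiased k v l w"
  shows "max_rel_proj_const CARD('m) (k + l) \<ge>
    (real CARD('m) - delta CARD('m) k * delta CARD('m) l) /
    (2 * sqrt (real CARD('m)) - delta CARD('m) k - delta CARD('m) l)"
proof -
  note m2 = assms(1) and k1 = assms(2) and l1 = assms(3)
  note ev = assms(4) and ew = assms(5)
  define s where "s = sqrt (real CARD('m))"
  define n where "n = k + l"
  have m0: "real CARD('m) > 0" by simp
  have s0: "s > 0" unfolding s_def by simp
  have ss: "s^2 = real CARD('m)" unfolding s_def by simp
  obtain cv where cv: "\<And>i j. i < k \<Longrightarrow> j < k \<Longrightarrow> i \<noteq> j \<Longrightarrow> \<bar>v i \<bullet> v j\<bar> = cv"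
    and cv0: "cv \<ge> 0" and k2: "k \<ge> 2" and km: "k \<ge> CARD('m)"
    and eqv: "1 + (real k - 1) * cv^2 = real k / real CARD('m)"
    using etf_const[OF ev m2 k1] by blast
  obtain cw where cw: "\<And>i j. i < l \<Longrightarrow> j < l \<Longrightarrow> i \<noteq> j \<Longrightarrow> \<bar>w i \<bullet> w j\<bar> = cw"
    and cw0: "cw \<ge> 0" and l2: "l \<ge> 2" and lm: "l \<ge> CARD('m)"
    and eqw: "1 + (real l - 1) * cw^2 = real l / real CARD('m)"
    using etf_const[OF ew m2 l1] by blast
  have mub: "\<And>i j. i < k \<Longrightarrow> j < l \<Longrightarrow> \<bar>v i \<bullet> w j\<bar> = 1 / s"
    using mub_const[OF ev ew assms(6) k1 l1] unfolding s_def by blast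
  define tv where "tv = inverse cv"
  define tw where "tw = inverse cw"
  define Dk where "Dk = 1 + tv * (real k / real CARD('m) - 1)"
  define Dl where "Dl = 1 + tw * (real l / real CARD('m) - 1)"
  have Dk_delta: "Dk = real k * delta CARD('m) k / real CARD('m)"
    unfolding Dk_def tv_def by (rule D_delta[OF cv0 eqv k1]) simp
  have Dl_delta: "Dl = real l * delta CARD('m) l / real CARD('m)"
    unfolding Dl_def tw_def by (rule D_delta[OF cw0 eqw l1]) simp
  have Lv: "tv * (real k / real CARD('m) - 1) = (real k - 1) * cv"
  proof (cases "cv = 0")
    case True then show ?thesis by (simp add: tv_def)
  next
    case False
    have "real k / real CARD('m) - 1 = (real k - 1) * cv^2" using eqv by simp
    then show ?thesis using False by (simp add: tv_def power2_eq_square field_simps)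
  qed
  have Lw: "tw * (real l / real CARD('m) - 1) = (real l - 1) * cw"
  proof (cases "cw = 0")
    case True then show ?thesis by (simp add: tw_def)
  next
    case False
    have "real l / real CARD('m) - 1 = (real l - 1) * cw^2" using eqw by simp
    then show ?thesis using False by (simp add: tw_def power2_eq_square field_simps)
  qed
  have m2r: "real CARD('m) \<ge> 2" using m2 by simp
  have Dk_lt: "Dk < s * real k / real CARD('m)"
    using D_less[OF cv0 eqv _ m2r s_def] k1 Lv unfolding Dk_def by simp
  have Dl_lt: "Dl < s * real l / real CARD('m)"
    using D_less[OF cw0 eqw _ m2r s_def] l1 Lw unfolding Dl_def by simp
  define \<rho> where "\<rho> = (s * real k / real CARD('m) - Dk) / (s * real l / real CARD('m) - Dl)"
  define \<mu> where "\<mu> = Dk + \<rho> * s * real l / real CARD('m)"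
  have \<rho>0: "\<rho> > 0" unfolding \<rho>_def using Dk_lt Dl_lt by simp
  have \<rho>eq: "\<rho> * (s * real l / real CARD('m) - Dl) = s * real k / real CARD('m) - Dk"
    unfolding \<rho>_def using Dl_lt by simp
  have \<mu>2: "s * real k / real CARD('m) + \<rho> * Dl = \<mu>"
    unfolding \<mu>_def using \<rho>eq by (simp add: algebra_simps)
  define a where "a i = (if i < k then v i else w (i - k))" for i
  define X where "X i j = (if i < k then (if j < k then (if i = j then 1 else tv * (v i \<bullet> v j))
                                          else s * (v i \<bullet> w (j - k)))
                           else (if j < k then \<rho> * s * (w (i - k) \<bullet> v j)
                                 else \<rho> * (if i = j then 1 else tw * (w (i - k) \<bullet> w (j - k)))))" for i j
  define M where "M i = (if i < k then 1 else \<rho>)" for i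
  have inj: "inj (emb n a)"
  proof (rule injI)
    fix x y assume e: "emb n a x = emb n a y"
    have "\<And>i. i < k \<Longrightarrow> v i \<bullet> x = v i \<bullet> y"
    proof -
      fix i assume i: "i < k"
      have "emb n a x i = emb n a y i" using e by simp
      then show "v i \<bullet> x = v i \<bullet> y" using i by (simp add: emb_def a_def n_def)
    qed
    then have "(\<Sum>i<k. (v i \<bullet> x) *\<^sub>R v i) = (\<Sum>i<k. (v i \<bullet> y) *\<^sub>R v i)" by simp
    then have "(real k / real CARD('m)) *\<^sub>R x = (real k / real CARD('m)) *\<^sub>R y"
      by (simp add: etf_frame[OF ev])
    then show "x = y" using k1 by simp
  qed
  have col: "(\<Sum>i<n. X i j *\<^sub>R a i) = \<mu> *\<^sub>R a j" if j: "j < n" for j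
  proof (cases "j < k")
    case True
    have s1: "(\<Sum>i<k. X i j *\<^sub>R a i) = Dk *\<^sub>R v j"
    proof -
      have "(\<Sum>i<k. X i j *\<^sub>R a i) = (\<Sum>i<k. (if i = j then 1 else tv * (v i \<bullet> v j)) *\<^sub>R v i)"
        using True by (intro sum.cong refl) (simp add: X_def a_def)
      also have "\<dots> = Dk *\<^sub>R v j" unfolding Dk_def by (rule block_sum[OF ev True])
      finally show ?thesis .
    qed
    have s2: "(\<Sum>i<l. X (k + i) j *\<^sub>R a (k + i)) = (\<rho> * s * real l / real CARD('m)) *\<^sub>R v j"
    proof -
      have "(\<Sum>i<l. X (k + i) j *\<^sub>R a (k + i)) = (\<rho> * s) *\<^sub>R (\<Sum>i<l. (w i \<bullet> v j) *\<^sub>R w i)"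
        using True by (simp add: X_def a_def scaleR_sum_right)
      also have "\<dots> = (\<rho> * s * real l / real CARD('m)) *\<^sub>R v j"
        by (simp add: etf_frame[OF ew])
      finally show ?thesis .
    qed
    show ?thesis unfolding n_def sum_split_nat s1 s2 using True
      by (simp add: a_def \<mu>_def scaleR_left_distrib[symmetric])
  next
    case False
    then obtain j' where j': "j = k + j'" "j' < l" using j unfolding n_def
      by (metis add_diff_inverse_nat add_less_cancel_left)
    have s1: "(\<Sum>i<k. X i j *\<^sub>R a i) = (s * real k / real CARD('m)) *\<^sub>R w j'"
    proof -
      have "(\<Sum>i<k. X i j *\<^sub>R a i) = s *\<^sub>R (\<Sum>i<k. (v i \<bullet> w j') *\<^sub>R v i)"
        using j' by (simp add: X_def a_def scaleR_sum_right)
      also have "\<dots> = (s * real k / real CARD('m)) *\<^sub>R w j'"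
        by (simp add: etf_frame[OF ev])
      finally show ?thesis .
    qed
    have s2: "(\<Sum>i<l. X (k + i) j *\<^sub>R a (k + i)) = (\<rho> * Dl) *\<^sub>R w j'"
    proof -
      have "(\<Sum>i<l. X (k + i) j *\<^sub>R a (k + i)) = \<rho> *\<^sub>R (\<Sum>i<l. (if i = j' then 1 else tw * (w i \<bullet> w j')) *\<^sub>R w i)"
        using j' by (simp add: X_def a_def scaleR_sum_right add_diff_cancel_left' cong: if_cong)
      also have "\<dots> = (\<rho> * Dl) *\<^sub>R w j'" unfolding Dl_def by (simp add: block_sum[OF ew j'(2)])
      finally show ?thesis .
    qed
    have "(\<Sum>i<n. X i j *\<^sub>R a i) = (s * real k / real CARD('m) + \<rho> * Dl) *\<^sub>R w j'"
      unfolding n_def sum_split_nat s1 s2 by (simp add: scaleR_left_distrib)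
    then show ?thesis using j' \<mu>2 by (simp add: a_def)
  qed
  have XM: "\<bar>X i j\<bar> \<le> M i" if i: "i < n" and j: "j < n" for i j
  proof (cases "i < k")
    case iT: True
    show ?thesis
    proof (cases "j < k")
      case jT: True
      show ?thesis
      proof (cases "i = j")
        case True then show ?thesis using iT jT by (simp add: X_def M_def)
      next
        case False
        have "\<bar>tv * (v i \<bullet> v j)\<bar> = inverse cv * cv"
          using cv[OF iT jT False] cv0 by (simp add: tv_def abs_mult)
        also have "\<dots> \<le> 1" by (rule inv_mult_le1[OF cv0])
        finally show ?thesis using iT jT False by (simp add: X_def M_def)
      qed
    next
      case jF: False
      have "j - k < l" using j jF unfolding n_def by simp
      then have "\<bar>s * (v i \<bullet> w (j - k))\<bar> = 1" using mub[OF iT] s0 by (simp add: abs_mult)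
      then show ?thesis using iT jF by (simp add: X_def M_def)
    qed
  next
    case iF: False
    have il: "i - k < l" using i iF unfolding n_def by simp
    show ?thesis
    proof (cases "j < k")
      case jT: True
      have "\<bar>\<rho> * s * (w (i - k) \<bullet> v j)\<bar> = \<rho>"
        using mub[OF jT il] s0 \<rho>0 by (simp add: abs_mult inner_commute)
      then show ?thesis using iF jT by (simp add: X_def M_def)
    next
      case jF: False
      have jl: "j - k < l" using j jF unfolding n_def by simp
      have "\<bar>(if i = j then 1 else tw * (w (i - k) \<bullet> w (j - k)))\<bar> \<le> 1"
      proof (cases "i = j")
        case False
        then have ne: "i - k \<noteq> j - k" using iF jF by simp
        have "\<bar>tw * (w (i - k) \<bullet> w (j - k))\<bar> = inverse cw * cw"
          using cw[OF il jl ne] cw0 by (simp add: tw_def abs_mult)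
        also have "\<dots> \<le> 1" by (rule inv_mult_le1[OF cw0])
        finally show ?thesis using False by simp
      qed simp
      then have "\<rho> * \<bar>(if i = j then 1 else tw * (w (i - k) \<bullet> w (j - k)))\<bar> \<le> \<rho> * 1"
        using \<rho>0 by (intro mult_left_mono) auto
      then show ?thesis using iF jF \<rho>0 by (simp add: X_def M_def abs_mult)
    qed
  qed
  have sumM: "(\<Sum>i<n. M i) = real k + real l * \<rho>"
    unfolding n_def sum_split_nat by (simp add: M_def)
  have den: "real k + real l * \<rho> > 0" using \<rho>0 k1 by (simp add: add_pos_nonneg)
  define T where "T = (real CARD('m) - delta CARD('m) k * delta CARD('m) l) /
    (2 * sqrt (real CARD('m)) - delta CARD('m) k - delta CARD('m) l)"
  have dk: "delta CARD('m) k = s^2 * Dk / real k" using Dk_delta k1 ss by (simp add: field_simps)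
  have dl: "delta CARD('m) l = s^2 * Dl / real l" using Dl_delta l1 ss by (simp add: field_simps)
  have T_eq: "T = \<mu> * real CARD('m) / (real k + real l * \<rho>)"
  proof -
    have h1: "s * real l / s^2 - Dl > 0" using Dl_lt ss by simp
    have h2: "s * real k / s^2 - Dk > 0" using Dk_lt ss by simp
    have h3: "\<rho> = (s * real k / s^2 - Dk) / (s * real l / s^2 - Dl)" using ss by (simp add: \<rho>_def)
    have "(s^2 - (s^2 * Dk / real k) * (s^2 * Dl / real l)) / (2 * s - s^2 * Dk / real k - s^2 * Dl / real l)
       = (Dk + \<rho> * s * real l / s^2) * s^2 / (real k + real l * \<rho>)"
      by (rule alg_identity2[OF s0 _ _ h1 h2 h3]) (use k1 l1 in auto)
    then show ?thesis unfolding T_def dk dl \<mu>_def ss s_def[symmetric] .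
  qed
  have projbound: "T \<le> opnorm_inf n P" if P: "is_projection n (range (emb n a)) P" for P
  proof -
    have "\<mu> * real CARD('m) \<le> opnorm_inf n P * (\<Sum>i<n. M i)"
      by (rule lower_bound_lemma[OF inj P XM col]) auto
    then show ?thesis unfolding T_eq sumM using den by (simp add: pos_divide_le_eq)
  qed
  define B0 where "B0 i r = a i $ inv_into UNIV ixm r" for i r
  have rB0: "(rowv B0 :: nat \<Rightarrow> real ^ 'm) = a"
    by (rule ext) (simp add: rowv_def B0_def vec_eq_iff ixm_inv1)
  have Y0: "is_subspace_dim n CARD('m) (range (emb n a))"
    unfolding is_subspace_dim_def
    by (rule exI[of _ B0]) (simp add: subspace_range[where 'a='m] subspace_inj[where 'a='m] rB0 inj)
  have rel_le: "rel_proj_const n Y \<le> real n" if Y: "is_subspace_dim n CARD('m) Y" for Y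
  proof -
    obtain B where YB: "Y = matvec n CARD('m) B ` vecs CARD('m)" and iB: "inj_on (matvec n CARD('m) B) (vecs CARD('m))"
      using Y unfolding is_subspace_dim_def by blast
    have Yr: "Y = range (emb n (rowv B :: nat \<Rightarrow> real ^ 'm))" using YB subspace_range[where 'a='m] by simp
    have ir: "inj (emb n (rowv B :: nat \<Rightarrow> real ^ 'm))" using iB subspace_inj[where 'a='m] by simp
    obtain P where P: "is_projection n Y P" "opnorm_inf n P \<le> real n"
      using proj_exists[OF ir] Yr by blast
    have "rel_proj_const n Y \<le> opnorm_inf n P" unfolding rel_proj_const_def
    proof (rule cInf_lower)
      show "opnorm_inf n P \<in> {opnorm_inf n P | P. is_projection n Y P}" using P by blast
      show "bdd_below {opnorm_inf n P | P. is_projection n Y P}"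
        unfolding bdd_below_def using opnorm_nonneg by blast
    qed
    then show ?thesis using P by simp
  qed
  have bdd: "bdd_above {rel_proj_const n Y | Y. is_subspace_dim n CARD('m) Y}"
    unfolding bdd_above_def using rel_le by blast
  have "T \<le> rel_proj_const n (range (emb n a))" unfolding rel_proj_const_def
  proof (rule cInf_greatest)
    show "{opnorm_inf n P | P. is_projection n (range (emb n a)) P} \<noteq> {}"
      using proj_exists[OF inj] by blast
  next
    fix x assume "x \<in> {opnorm_inf n P | P. is_projection n (range (emb n a)) P}"
    then show "T \<le> x" using projbound by blast
  qed
  also have "\<dots> \<le> max_rel_proj_const CARD('m) n" unfolding max_rel_proj_const_def
    by (rule cSup_upper[OF _ bdd]) (use Y0 in blast)
  finally show ?thesis unfolding T_def n_def .
qed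

end
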